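(* Let $S=(\mathbb{R}\cup\{-\infty\},\max,+,-\infty,0)$ be the max-plus semiring, let $A\in M_{n}(S)$ with $\det_{\varepsilon}(A)\neq-\infty$, and let $b\in S^{n}$ be a regular vector. Then $(AA^{-})_{ij}\le b_i-b_j$ for all $i,j\in\{1,\dots,n\}$ if and only if the system $AX=b$ has the maximal solution $X^{*}=A^{-}b$.
   Context: Matrix operations over $S$: $(A+B)_{ij}=\max(a_{ij},b_{ij})$, $(AC)_{ij}=\max_k(a_{ik}+c_{kj})$. The $\varepsilon$-determinant (with the identity $\varepsilon$-function) of $A\in M_n(S)$ is $\det_{\varepsilon}(A)=\max_{\sigma\in\mathcal{S}_n}\sum_{i=1}^{n}a_{i\sigma(i)}$. For $n\ge 2$, $A(i|j)$ denotes the $(n-1)\times(n-1)$ submatrix obtained by deleting row $i$ and column $j$, and the $\varepsilon$-adjoint is $\mathrm{adj}_{\varepsilon}(A)_{ij}=\det_{\varepsilon}(A(j|i))$. When $\det_{\varepsilon}(A)$ is a unit of $S$ (i.e. $\neq-\infty$), the pseudo-inverse of $A$ is $A^{-}=(a^{-}_{ij})$ with $a^{-}_{ij}=\mathrm{adj}_{\varepsilon}(A)_{ij}-\det_{\varepsilon}(A)$ (ordinary real subtraction). A vector $b\in S^n$ is regular if $b_i\neq-\infty$ for all $i$; $b_i-b_j$ is ordinary real subtraction. A solution $X^{*}$ of $AX=b$ is maximal if $X\le X^{*}$ componentwise for every solution $X$. *)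

theory Defs
  imports "HOL-Library.Extended_Real" "HOL-Combinatorics.Permutations"
begin

text \<open>Max-plus semiring S = R \<union> {-\<infinity>}, modelled inside ereal as the values different
  from +\<infinity>. Semiring addition is max, semiring multiplication is +, zero is -\<infinity>, one is 0.
  Matrices in M_n(S) are functions nat \<Rightarrow> nat \<Rightarrow> ereal, only entries with indices < n matter
  (indices 0..n-1 correspond to 1..n).\<close>

definition in_S :: "ereal \<Rightarrow> bool" where
  "in_S x \<longleftrightarrow> x \<noteq> \<infinity>"

definition mp_mat :: "nat \<Rightarrow> (nat \<Rightarrow> nat \<Rightarrow> ereal) \<Rightarrow> bool" where
  "mp_mat n A \<longleftrightarrow> (\<forall>i<n. \<forall>j<n. in_S (A i j))"

definition mp_vec :: "nat \<Rightarrow> (nat \<Rightarrow> ereal) \<Rightarrow> bool" where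
  "mp_vec n x \<longleftrightarrow> (\<forall>i<n. in_S (x i))"

definition regular_vec :: "nat \<Rightarrow> (nat \<Rightarrow> ereal) \<Rightarrow> bool" where
  "regular_vec n b \<longleftrightarrow> mp_vec n b \<and> (\<forall>i<n. b i \<noteq> -\<infinity>)"

definition mp_mult :: "nat \<Rightarrow> (nat \<Rightarrow> nat \<Rightarrow> ereal) \<Rightarrow> (nat \<Rightarrow> nat \<Rightarrow> ereal) \<Rightarrow> nat \<Rightarrow> nat \<Rightarrow> ereal" where
  "mp_mult n A C i j = (MAX k\<in>{..<n}. A i k + C k j)"

definition mp_mult_vec :: "nat \<Rightarrow> (nat \<Rightarrow> nat \<Rightarrow> ereal) \<Rightarrow> (nat \<Rightarrow> ereal) \<Rightarrow> nat \<Rightarrow> ereal" where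
  "mp_mult_vec n A x i = (MAX k\<in>{..<n}. A i k + x k)"

text \<open>epsilon-determinant with identity epsilon-function\<close>
definition det_eps :: "nat \<Rightarrow> (nat \<Rightarrow> nat \<Rightarrow> ereal) \<Rightarrow> ereal" where
  "det_eps n A = (MAX \<sigma>\<in>{\<sigma>. \<sigma> permutes {..<n}}. \<Sum>i<n. A i (\<sigma> i))"

definition skip :: "nat \<Rightarrow> nat \<Rightarrow> nat" where
  "skip i k = (if k < i then k else Suc k)"

definition submat :: "(nat \<Rightarrow> nat \<Rightarrow> ereal) \<Rightarrow> nat \<Rightarrow> nat \<Rightarrow> nat \<Rightarrow> nat \<Rightarrow> ereal" where
  "submat A i j = (\<lambda>k l. A (skip i k) (skip j l))"

definition adj_eps :: "nat \<Rightarrow> (nat \<Rightarrow> nat \<Rightarrow> ereal) \<Rightarrow> nat \<Rightarrow> nat \<Rightarrow> ereal" where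
  "adj_eps n A i j = det_eps (n - 1) (submat A j i)"

definition pinv :: "nat \<Rightarrow> (nat \<Rightarrow> nat \<Rightarrow> ereal) \<Rightarrow> nat \<Rightarrow> nat \<Rightarrow> ereal" where
  "pinv n A i j = adj_eps n A i j - det_eps n A"

definition is_solution :: "nat \<Rightarrow> (nat \<Rightarrow> nat \<Rightarrow> ereal) \<Rightarrow> (nat \<Rightarrow> ereal) \<Rightarrow> (nat \<Rightarrow> ereal) \<Rightarrow> bool" where
  "is_solution n A b X \<longleftrightarrow> mp_vec n X \<and> (\<forall>i<n. mp_mult_vec n A X i = b i)"

definition is_maximal_solution :: "nat \<Rightarrow> (nat \<Rightarrow> nat \<Rightarrow> ereal) \<Rightarrow> (nat \<Rightarrow> ereal) \<Rightarrow> (nat \<Rightarrow> ereal) \<Rightarrow> bool" where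
  "is_maximal_solution n A b Xs \<longleftrightarrow> is_solution n A b Xs \<and>
     (\<forall>X. is_solution n A b X \<longrightarrow> (\<forall>i<n. X i \<le> Xs i))"

end

theory Submission
  imports Defs
begin

definition unskip :: "nat \<Rightarrow> nat \<Rightarrow> nat" where
  "unskip j m = (if m < j then m else m - 1)"

lemma bij_skip:
  assumes "i < n"
  shows "bij_betw (skip i) {..<n-1} ({..<n}-{i})"
  by (rule bij_betw_byWitness[where f'="unskip i"])
     (use assms in \<open>auto simp: skip_def unskip_def split: if_splits\<close>)

lemma bij_unskip:
  assumes "j < n"
  shows "bij_betw (unskip j) ({..<n}-{j}) {..<n-1}"
  by (rule bij_betw_byWitness[where f'="skip j"])
     (use assms in \<open>auto simp: skip_def unskip_def split: if_splits\<close>)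

lemma laplace_lower:
  fixes A :: "nat \<Rightarrow> nat \<Rightarrow> ereal"
  assumes sig: "\<sigma> permutes {..<n}" and i: "i < n"
  shows "(\<Sum>l<n. A l (\<sigma> l)) \<le> A i (\<sigma> i) + det_eps (n-1) (submat A i (\<sigma> i))"
proof -
  define \<tau> where "\<tau> = (\<lambda>k. if k < n-1 then unskip (\<sigma> i) (\<sigma> (skip i k)) else k)"
  have si: "\<sigma> i < n" using permutes_in_image[OF sig, of i] i by simp
  have bs: "bij_betw \<sigma> ({..<n}-{i}) ({..<n}-{\<sigma> i})"
    by (rule bij_betw_DiffI) (use permutes_imp_bij[OF sig] i si in \<open>auto simp: bij_betw_def\<close>)
  have "bij_betw (unskip (\<sigma> i) \<circ> (\<sigma> \<circ> skip i)) {..<n-1} {..<n-1}"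
    by (rule bij_betw_trans[OF bij_betw_trans[OF bij_skip[OF i] bs] bij_unskip[OF si]])
  hence "bij_betw \<tau> {..<n-1} {..<n-1}"
    by (rule bij_betw_cong[THEN iffD1, rotated]) (auto simp: \<tau>_def)
  hence tp: "\<tau> permutes {..<n-1}"
    by (rule bij_imp_permutes) (auto simp: \<tau>_def)
  have eq: "(\<Sum>k<n-1. submat A i (\<sigma> i) k (\<tau> k)) = (\<Sum>l\<in>{..<n}-{i}. A l (\<sigma> l))"
  proof -
    have "(\<Sum>k<n-1. submat A i (\<sigma> i) k (\<tau> k)) = (\<Sum>k<n-1. A (skip i k) (\<sigma> (skip i k)))"
    proof (rule sum.cong[OF refl])
      fix k assume k: "k \<in> {..<n-1}"
      have "skip i k \<in> {..<n}-{i}" using bij_betw_apply[OF bij_skip[OF i] k] .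
      hence "\<sigma> (skip i k) \<noteq> \<sigma> i" using permutes_inj[OF sig] by (auto dest: injD)
      hence "skip (\<sigma> i) (\<tau> k) = \<sigma> (skip i k)" using k
        by (auto simp: \<tau>_def skip_def unskip_def)
      thus "submat A i (\<sigma> i) k (\<tau> k) = A (skip i k) (\<sigma> (skip i k))"
        by (simp add: submat_def)
    qed
    also have "\<dots> = (\<Sum>l\<in>{..<n}-{i}. A l (\<sigma> l))"
      by (rule sum.reindex_bij_betw[OF bij_skip[OF i]])
    finally show ?thesis .
  qed
  have "(\<Sum>k<n-1. submat A i (\<sigma> i) k (\<tau> k)) \<le> det_eps (n-1) (submat A i (\<sigma> i))"
    unfolding det_eps_def
    by (rule Max_ge) (use tp finite_permutations[of "{..<n-1}"] in auto)
  moreover have "(\<Sum>l<n. A l (\<sigma> l)) = A i (\<sigma> i) + (\<Sum>l\<in>{..<n}-{i}. A l (\<sigma> l))"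
    using i by (simp add: sum.remove)
  ultimately show ?thesis using eq by (simp add: add_left_mono)
qed

theorem theorem4p3:
  fixes n :: nat and A :: "nat \<Rightarrow> nat \<Rightarrow> ereal" and b :: "nat \<Rightarrow> ereal"
  assumes "n \<ge> 1"
    and "mp_mat n A"
    and "det_eps n A \<noteq> -\<infinity>"
    and "regular_vec n b"
  shows "(\<forall>i<n. \<forall>j<n. mp_mult n A (pinv n A) i j \<le> b i - b j)
         \<longleftrightarrow> is_maximal_solution n A b (mp_mult_vec n (pinv n A) b)"
proof -
  define P where "P = pinv n A"
  define y where "y = mp_mult_vec n P b"
  have fin: "finite {\<sigma>. \<sigma> permutes {..<n}}" by (rule finite_permutations) simp
  obtain \<sigma> where sig: "\<sigma> permutes {..<n}" and dsig: "det_eps n A = (\<Sum>l<n. A l (\<sigma> l))"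
  proof -
    have "det_eps n A \<in> (\<lambda>\<sigma>. \<Sum>i<n. A i (\<sigma> i)) ` {\<sigma>. \<sigma> permutes {..<n}}"
      unfolding det_eps_def by (rule Max_in) (use fin permutes_id[of "{..<n}"] in blast)+
    thus ?thesis using that by auto
  qed
  have Ant: "\<And>i j. i < n \<Longrightarrow> j < n \<Longrightarrow> A i j \<noteq> \<infinity>"
    using assms(2) by (auto simp: mp_mat_def in_S_def)
  have bfin: "\<And>i. i < n \<Longrightarrow> \<bar>b i\<bar> \<noteq> \<infinity>"
    using assms(4) by (auto simp: regular_vec_def mp_vec_def in_S_def)
  have dnt: "det_eps n A \<noteq> \<infinity>"
    unfolding dsig by (auto simp: sum_Pinfty) (metis Ant lessThan_iff permutes_in_image[OF sig])
  then obtain d where d: "det_eps n A = ereal d" using assms(3) by (cases "det_eps n A") auto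
  have adjnt: "adj_eps n A k j \<noteq> \<infinity>" if "k < n" "j < n" for k j
  proof -
    have "adj_eps n A k j \<in> (\<lambda>\<sigma>. \<Sum>i<n-1. submat A j k i (\<sigma> i)) ` {\<sigma>. \<sigma> permutes {..<n-1}}"
      unfolding adj_eps_def det_eps_def
      by (rule Max_in) (use finite_permutations[of "{..<n-1}"] permutes_id[of "{..<n-1}"] in blast)+
    then obtain \<tau> where tp: "\<tau> permutes {..<n-1}" and e: "adj_eps n A k j = (\<Sum>i<n-1. submat A j k i (\<tau> i))"
      by auto
    have "submat A j k i (\<tau> i) \<noteq> \<infinity>" if "i < n-1" for i
    proof -
      have "\<tau> i < n-1" using permutes_in_image[OF tp, of i] that by simp
      thus ?thesis using that \<open>k<n\<close> \<open>j<n\<close> Ant by (auto simp: submat_def skip_def)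
    qed
    thus ?thesis unfolding e by (auto simp: sum_Pinfty)
  qed
  have Pnt: "P k j \<noteq> \<infinity>" if "k < n" "j < n" for k j
    using adjnt[OF that] by (cases "adj_eps n A k j") (auto simp: P_def pinv_def d)
  have key: "0 \<le> a + (c - ereal d)" if "ereal d \<le> a + c" "a \<noteq> \<infinity>" "c \<noteq> \<infinity>" for a c
    using that by (cases a; cases c) auto
  have F1: "\<exists>k<n. 0 \<le> A i k + P k i" if i: "i < n" for i
  proof (intro exI conjI)
    show "\<sigma> i < n" using permutes_in_image[OF sig, of i] i by simp
    have "ereal d \<le> A i (\<sigma> i) + adj_eps n A (\<sigma> i) i"
      using laplace_lower[OF sig i, of A] unfolding dsig[symmetric] d adj_eps_def .
    thus "0 \<le> A i (\<sigma> i) + P (\<sigma> i) i"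
      unfolding P_def pinv_def d using key Ant adjnt i \<open>\<sigma> i < n\<close> by blast
  qed
  have F2: "\<exists>j<n. 0 \<le> P k j + A j k" if k: "k < n" for k
  proof (intro exI conjI)
    define j where "j = inv \<sigma> k"
    have sj: "\<sigma> j = k" unfolding j_def using permutes_inverses(1)[OF sig] by simp
    show jn: "j < n" unfolding j_def using permutes_in_image[OF permutes_inv[OF sig], of k] k by simp
    have "ereal d \<le> A j k + adj_eps n A k j"
      using laplace_lower[OF sig jn, of A] unfolding dsig[symmetric] d adj_eps_def sj .
    hence "0 \<le> A j k + P k j"
      unfolding P_def pinv_def d using key Ant adjnt jn k by blast
    thus "0 \<le> P k j + A j k" by (simp add: add.commute)
  qed
  have ynt: "y k \<noteq> \<infinity>" and yge: "\<And>j. j < n \<Longrightarrow> P k j + b j \<le> y k"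
    and yin: "\<exists>j<n. y k = P k j + b j" if k: "k < n" for k
  proof -
    have ne: "{..<n} \<noteq> {}" using assms(1) lessThan_empty_iff by auto
    have "y k \<in> (\<lambda>j. P k j + b j) ` {..<n}"
      unfolding y_def mp_mult_vec_def by (rule Max_in) (use ne in auto)
    thus "\<exists>j<n. y k = P k j + b j" by auto
    then obtain j where "j < n" "y k = P k j + b j" by blast
    thus "y k \<noteq> \<infinity>" using Pnt[OF k] bfin[of j] by (cases "b j") auto
    show "\<And>j. j < n \<Longrightarrow> P k j + b j \<le> y k"
      unfolding y_def mp_mult_vec_def by (rule Max_ge) auto
  qed
  have ne: "{..<n} \<noteq> {}" using assms(1) lessThan_empty_iff by auto
  show ?thesis unfolding P_def[symmetric] y_def[symmetric]
  proof
    assume H: "\<forall>i<n. \<forall>j<n. mp_mult n A P i j \<le> b i - b j"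
    have sol: "mp_mult_vec n A y i = b i" if i: "i < n" for i
    proof (rule antisym)
      show "mp_mult_vec n A y i \<le> b i"
        unfolding mp_mult_vec_def
      proof (subst Max_le_iff, simp, use ne in simp, intro ballI, elim imageE)
        fix z k assume z: "z = A i k + y k" and k: "k \<in> {..<n}"
        obtain j where j: "j < n" "y k = P k j + b j" using yin k by auto
        have "z = (A i k + P k j) + b j" using z j by (simp add: add.assoc)
        also have "\<dots> \<le> mp_mult n A P i j + b j"
          by (rule add_right_mono) (unfold mp_mult_def, rule Max_ge, use k in auto)
        also have "\<dots> \<le> (b i - b j) + b j"
          by (rule add_right_mono) (use H i j in auto)
        also have "\<dots> = b i" using bfin[OF i] bfin[OF j(1)]
          by (cases "b i"; cases "b j") auto
        finally show "z \<le> b i" .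
      qed
    next
      obtain k where k: "k < n" "0 \<le> A i k + P k i" using F1 i by blast
      have "b i = 0 + b i" by simp
      also have "\<dots> \<le> (A i k + P k i) + b i" by (rule add_right_mono) (rule k(2))
      also have "\<dots> = A i k + (P k i + b i)" by (simp add: add.assoc)
      also have "\<dots> \<le> A i k + y k" by (rule add_left_mono) (rule yge[OF k(1) i])
      also have "\<dots> \<le> mp_mult_vec n A y i"
        unfolding mp_mult_vec_def by (rule Max_ge) (use k in auto)
      finally show "b i \<le> mp_mult_vec n A y i" .
    qed
    have "is_solution n A b y"
      using sol ynt by (auto simp: is_solution_def mp_vec_def in_S_def)
    moreover have "X k \<le> y k" if X: "is_solution n A b X" and k: "k < n" for X k
    proof -
      obtain j where j: "j < n" "0 \<le> P k j + A j k" using F2 k by blast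
      have "A j k + X k \<le> mp_mult_vec n A X j"
        unfolding mp_mult_vec_def by (rule Max_ge) (use k in auto)
      hence le: "A j k + X k \<le> b j" using X j by (auto simp: is_solution_def)
      have Xnt: "X k \<noteq> \<infinity>" using X k by (auto simp: is_solution_def mp_vec_def in_S_def)
      have "X k \<le> P k j + b j"
        using le j(2) Xnt Pnt[OF k j(1)] Ant[OF j(1) k] bfin[OF j(1)]
        by (cases "X k"; cases "P k j"; cases "A j k"; cases "b j") auto
      also have "\<dots> \<le> y k" by (rule yge[OF k j(1)])
      finally show ?thesis .
    qed
    ultimately show "is_maximal_solution n A b y" by (auto simp: is_maximal_solution_def)
  next
    assume M: "is_maximal_solution n A b y"
    hence sol: "\<And>i. i < n \<Longrightarrow> mp_mult_vec n A y i = b i"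
      by (auto simp: is_maximal_solution_def is_solution_def)
    show "\<forall>i<n. \<forall>j<n. mp_mult n A P i j \<le> b i - b j"
    proof (intro allI impI)
      fix i j assume i: "i < n" and j: "j < n"
      show "mp_mult n A P i j \<le> b i - b j"
        unfolding mp_mult_def
      proof (subst Max_le_iff, simp, use ne in simp, intro ballI, elim imageE)
        fix z k assume z: "z = A i k + P k j" and k: "k \<in> {..<n}"
        have "A i k + (P k j + b j) \<le> A i k + y k"
          by (rule add_left_mono) (rule yge, use k j in auto)
        also have "\<dots> \<le> mp_mult_vec n A y i"
          unfolding mp_mult_vec_def by (rule Max_ge) (use k in auto)
        also have "\<dots> = b i" using sol i .
        finally have "z + b j \<le> b i" using z by (simp add: add.assoc)
        thus "z \<le> b i - b j" using bfin[OF i] bfin[OF j]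
          by (cases z; cases "b i"; cases "b j") auto
      qed
    qed
  qed
qed

end
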